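(* For every integer $n>0$ and every integer $j$ with $0\le j\le n$, the number $\Phi_n=\prod_{p\text{ prime},\ \{n/p\}\in[2/3,1)}p$ divides $\binom{n+j}{n}\binom{2n-j}{n}$.
   Context: $\{x\}$ denotes the fractional part of $x$. *)

theory Defs
  imports Complex_Main "HOL-Computational_Algebra.Primes"
begin

definition Phi :: "nat \<Rightarrow> nat" where
  "Phi n = (\<Prod>p\<in>{p::nat. prime p \<and> 2/3 \<le> frac (real n / real p) \<and> frac (real n / real p) < 1}. p)"

end

theory Submission
  imports Defs
begin

lemma choose_mod_dvd:
  fixes p :: nat
  assumes p: "prime p"
  shows "m mod p < n mod p \<Longrightarrow> p dvd (m choose n)"
proof (induction m arbitrary: n)
  case 0
  then have "n > 0" by (cases n) auto
  then show ?case by (simp add: binomial_eq_0)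
next
  case (Suc m)
  have p1: "p > 1" using p prime_gt_1_nat by blast
  show ?case
  proof (cases "Suc m mod p = 0")
    case True
    have n0: "n > 0" using Suc.prems by (cases n) auto
    have nd: "\<not> p dvd n" using Suc.prems by (simp add: dvd_eq_mod_eq_0)
    have "n * (Suc m choose n) = Suc m * (m choose (n - 1))"
      using times_binomial_minus1_eq[OF n0, of "Suc m"] by simp
    moreover have "p dvd Suc m" using True by (simp add: dvd_eq_mod_eq_0)
    ultimately have "p dvd n * (Suc m choose n)" by (metis dvd_mult2)
    then show ?thesis using nd p prime_dvd_multD by blast
  next
    case False
    obtain n' where n': "n = Suc n'" using Suc.prems by (cases n) auto
    have a: "m mod p = Suc m mod p - 1" using False p1
      by (metis Suc_pred' bot_nat_0.not_eq_extremum mod_Suc diff_Suc_1)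
    have b: "n' mod p = n mod p - 1" using Suc.prems p1 n'
      by (metis Suc_pred' diff_Suc_1 gr_zeroI less_zeroE mod_Suc)
    have "m mod p < n' mod p" using a b Suc.prems False by linarith
    moreover have "m mod p < Suc n' mod p"
    proof -
      have c: "Suc m mod p < Suc n' mod p" using Suc.prems n' by simp
      show ?thesis using a c by linarith
    qed
    ultimately have "p dvd (m choose n')" "p dvd (m choose Suc n')" using Suc.IH by auto
    then show ?thesis using n' by simp
  qed
qed

lemma frac_nat_div:
  fixes n p :: nat
  assumes "p > 0"
  shows "frac (real n / real p) = real (n mod p) / real p"
proof -
  have "real n = real (n div p) * real p + real (n mod p)"
    by (metis of_nat_add of_nat_mult div_mult_mod_eq)
  then have "real n / real p - real (n mod p) / real p = real (n div p)"
    using assms by (simp add: field_simps)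
  moreover have "real (n mod p) / real p < 1" using assms by simp
  ultimately show ?thesis by (subst frac_unique_iff) auto
qed

lemma prod_primes_dvd:
  fixes x :: nat
  shows "finite S \<Longrightarrow> (\<forall>p\<in>S. prime p \<and> p dvd x) \<Longrightarrow> \<Prod>S dvd x"
proof (induction S rule: finite_induct)
  case empty
  then show ?case by simp
next
  case (insert q S)
  have "\<not> q dvd \<Prod>S"
  proof
    assume "q dvd \<Prod>S"
    then obtain r where "r \<in> S" "q dvd r" using insert prime_dvd_prod_iff[of S q id] by auto
    then have "q = r" using insert primes_dvd_imp_eq by auto
    then show False using insert \<open>r \<in> S\<close> by auto
  qed
  then have "coprime q (\<Prod>S)" using insert prime_imp_coprime by auto
  then show ?case using insert divides_mult by auto
qed

lemma key:
  fixes n j p :: nat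
  assumes p: "prime p" and j: "j \<le> n" and r: "3 * (n mod p) \<ge> 2 * p"
  shows "p dvd ((n + j) choose n) * ((2 * n - j) choose n)"
proof -
  have p0: "p > 0" using p prime_gt_0_nat by blast
  define q where "q = n div p"
  define rr where "rr = n mod p"
  define t where "t = j div p"
  define s where "s = j mod p"
  have n: "n = q * p + rr" by (simp add: q_def rr_def)
  have jj: "j = t * p + s" by (simp add: t_def s_def)
  have rp: "rr < p" "s < p" using p0 by (auto simp: rr_def s_def)
  show ?thesis
  proof (cases "rr + s \<ge> p")
    case True
    have "(n + j) mod p = rr + s - p"
    proof -
      have "n + j = (q + t + 1) * p + (rr + s - p)" using n jj True by (simp add: algebra_simps)
      moreover have "rr + s - p < p" using rp by linarith
      ultimately show ?thesis by (metis mod_mult_self3 mod_less)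
    qed
    then have "(n + j) mod p < n mod p" using rp True rr_def by linarith
    then have "p dvd ((n + j) choose n)" using choose_mod_dvd[OF p] by blast
    then show ?thesis by simp
  next
    case False
    have tq: "t \<le> q" using j by (simp add: q_def t_def div_le_mono)
    have sp: "2 * rr \<ge> s + p" using False r rr_def rp by linarith
    have e: "2 * n - j = (2 * q - t + 1) * p + (2 * rr - s - p)"
    proof -
      obtain d where d: "q = t + d" using tq le_Suc_ex by blast
      obtain e where e: "2 * rr = s + p + e" using sp le_Suc_ex by blast
      have "2 * n = (t + 2 * d + 1) * p + e + j" using n jj d e by (simp add: algebra_simps)
      moreover have "2 * q - t + 1 = t + 2 * d + 1" "2 * rr - s - p = e" using d e by auto
      ultimately show ?thesis by simp
    qed
    have "2 * rr - s - p < p" using rp by linarith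
    then have "(2 * n - j) mod p = 2 * rr - s - p" by (metis e mod_mult_self3 mod_less)
    then have "(2 * n - j) mod p < n mod p" using rp False rr_def sp by linarith
    then have "p dvd ((2 * n - j) choose n)" using choose_mod_dvd[OF p] by blast
    then show ?thesis by simp
  qed
qed

theorem mainTheorem15:
  fixes n j :: nat
  assumes "n > 0" and "j \<le> n"
  shows "Phi n dvd ((n + j) choose n) * ((2 * n - j) choose n)"
proof -
  define S where "S = {p::nat. prime p \<and> 2/3 \<le> frac (real n / real p) \<and> frac (real n / real p) < 1}"
  have P: "Phi n = \<Prod>S" unfolding Phi_def S_def by simp
  show ?thesis
  proof (cases "finite S")
    case False
    then show ?thesis using P by simp
  next
    case True
    have "\<forall>p\<in>S. prime p \<and> p dvd ((n + j) choose n) * ((2 * n - j) choose n)"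
    proof
      fix p assume "p \<in> S"
      then have p: "prime p" and f: "2/3 \<le> frac (real n / real p)" unfolding S_def by auto
      have p0: "p > 0" using p prime_gt_0_nat by blast
      have "2/3 \<le> real (n mod p) / real p" using f frac_nat_div[OF p0] by simp
      then have "2 * real p \<le> 3 * real (n mod p)" using p0 by (simp add: field_simps)
      then have "2 * p \<le> 3 * (n mod p)" by linarith
      then show "prime p \<and> p dvd ((n + j) choose n) * ((2 * n - j) choose n)"
        using key[OF p assms(2)] p by auto
    qed
    then show ?thesis using P prod_primes_dvd[OF True] by simp
  qed
qed

end
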